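(* Let $c \geq 1$ and let $\Gamma \subset \mathbb{P}^c$ be a finite set of $d$ points in linear semi-uniform position. Then for each $m \geq 2$, $$h^0(\mathbb{P}^c, \mathcal{I}_\Gamma(m)) = \binom{c+m}{m} - d \ \text{ if } d \leq 2c+1, \qquad h^0(\mathbb{P}^c, \mathcal{I}_\Gamma(m)) \leq \binom{c+m}{m} - 2c - 1 \ \text{ if } d \geq 2c+2.$$ In particular, $h^0(\mathbb{P}^c, \mathcal{I}_\Gamma(2)) = \binom{c+1}{2} + c + 1 - d$ if $d \leq 2c+1$, and $h^0(\mathbb{P}^c, \mathcal{I}_\Gamma(2)) \leq \binom{c}{2}$ if $d \geq 2c+2$.
   Context: The ground field is algebraically closed of arbitrary characteristic. A finite set $\Gamma \subset \mathbb{P}^c$ is in linear semi-uniform position if it spans $\mathbb{P}^c$ and there are integers $\nu(i,\Gamma)$, $0 \leq i \leq c$, such that every $i$-dimensional linear subspace of $\mathbb{P}^c$ spanned by $i+1$ linearly independent points of $\Gamma$ contains exactly $\nu(i,\Gamma)$ points of $\Gamma$. $\mathcal{I}_\Gamma$ denotes the ideal sheaf of $\Gamma$. *)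

theory Defs
  imports "HOL-Analysis.Analysis" "HOL-Computational_Algebra.Polynomial"
    "HOL-Library.Function_Algebras"
begin

text \<open>Projective space P^c over a field 'k is modelled by nonzero vectors of 'k^'n,
  where CARD('n) = c + 1, up to nonzero scalars.\<close>

definition proj_point_set :: "('k::field ^ 'n) set \<Rightarrow> bool" where
  "proj_point_set \<Gamma> \<longleftrightarrow> finite \<Gamma> \<and> 0 \<notin> \<Gamma> \<and>
     (\<forall>p\<in>\<Gamma>. \<forall>q\<in>\<Gamma>. (\<exists>a. q = a *s p) \<longrightarrow> q = p)"

definition linear_semi_uniform_position :: "('k::field ^ 'n) set \<Rightarrow> bool" where
  "linear_semi_uniform_position \<Gamma> \<longleftrightarrow>
     vec.span \<Gamma> = UNIV \<and>
     (\<exists>\<nu> :: nat \<Rightarrow> nat. \<forall>i \<le> CARD('n) - 1. \<forall>S \<subseteq> \<Gamma>.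
        vec.independent S \<and> card S = i + 1 \<longrightarrow> card {p \<in> \<Gamma>. p \<in> vec.span S} = \<nu> i)"

text \<open>Homogeneous forms of degree m in the CARD('n) coordinates: coefficient functions on
  exponent vectors, supported on monomials of total degree m.\<close>

definition monomials_deg :: "nat \<Rightarrow> ('n::finite \<Rightarrow> nat) set" where
  "monomials_deg m = {e. (\<Sum>i\<in>UNIV. e i) = m}"

definition forms_deg :: "nat \<Rightarrow> (('n::finite \<Rightarrow> nat) \<Rightarrow> 'k::field) set" where
  "forms_deg m = {F. \<forall>e. e \<notin> monomials_deg m \<longrightarrow> F e = 0}"

definition eval_form :: "nat \<Rightarrow> (('n::finite \<Rightarrow> nat) \<Rightarrow> 'k::field) \<Rightarrow> 'k ^ 'n \<Rightarrow> 'k" where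
  "eval_form m F x = (\<Sum>e\<in>monomials_deg m. F e * (\<Prod>i\<in>UNIV. (x $ i) ^ e i))"

interpretation coeff_vs: vector_space "\<lambda>(a::'k::field) (f::'b \<Rightarrow> 'k). (\<lambda>x. a * f x)"
  by unfold_locales (auto simp: fun_eq_iff algebra_simps)

definition h0_ideal_sheaf :: "('k::field ^ 'n::finite) set \<Rightarrow> nat \<Rightarrow> nat" where
  "h0_ideal_sheaf \<Gamma> m =
     coeff_vs.dim {F :: ('n \<Rightarrow> nat) \<Rightarrow> 'k. F \<in> forms_deg m \<and> (\<forall>p\<in>\<Gamma>. eval_form m F p = 0)}"

end

theory Submission
  imports Defs
begin


lemma fun_sum_apply: "(sum f A) x = (\<Sum>a\<in>A. f a x)"
  by (induction A rule: infinite_finite_induct) auto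

lemma finite_monomials: "finite (monomials_deg m :: ('n::finite \<Rightarrow> nat) set)"
proof -
  have "e i \<le> m" if "e \<in> monomials_deg m" for e :: "'n \<Rightarrow> nat" and i
    using that member_le_sum[of i UNIV e] unfolding monomials_deg_def by simp
  then have "monomials_deg m \<subseteq> Pi\<^sub>E UNIV (\<lambda>_::'n. {..m})"
    by (auto simp: PiE_UNIV_domain)
  moreover have "finite (Pi\<^sub>E UNIV (\<lambda>_::'n. {..m}))" by (intro finite_PiE) auto
  ultimately show ?thesis by (rule finite_subset)
qed

lemma card_monomials: "card (monomials_deg m :: ('n::finite \<Rightarrow> nat) set) = (m + CARD('n) - 1) choose m"
proof -
  obtain g :: "nat \<Rightarrow> 'n" where g: "bij_betw g {0..<CARD('n)} UNIV"
    using ex_bij_betw_nat_finite[of "UNIV :: 'n set"] by auto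
  define \<phi> where "\<phi> e = map (e \<circ> g) [0..<CARD('n)]" for e :: "'n \<Rightarrow> nat"
  have sumeq: "sum_list (\<phi> e) = sum e UNIV" for e
  proof -
    have "sum_list (\<phi> e) = (\<Sum>j\<in>{0..<CARD('n)}. e (g j))"
      unfolding \<phi>_def by (simp add: sum_list_sum_nth)
    also have "\<dots> = sum e UNIV" using sum.reindex_bij_betw[OF g, of e] by simp
    finally show ?thesis .
  qed
  have "bij_betw \<phi> (monomials_deg m) {l. size l = CARD('n) \<and> sum_list l = m}"
  proof (rule bij_betwI'[where f = \<phi>])
    fix x y :: "'n \<Rightarrow> nat" assume "x \<in> monomials_deg m" "y \<in> monomials_deg m"
    show "(\<phi> x = \<phi> y) = (x = y)"
    proof
      assume h: "\<phi> x = \<phi> y"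
      show "x = y"
      proof
        fix i
        obtain j where "j < CARD('n)" "i = g j" using g unfolding bij_betw_def by force
        moreover have "(\<phi> x) ! j = (\<phi> y) ! j" using h by simp
        ultimately show "x i = y i" unfolding \<phi>_def by simp
      qed
    qed simp
  next
    fix x :: "'n \<Rightarrow> nat" assume "x \<in> monomials_deg m"
    then show "\<phi> x \<in> {l. length l = CARD('n) \<and> sum_list l = m}"
      by (simp add: sumeq monomials_deg_def) (simp add: \<phi>_def)
  next
    fix l assume l: "l \<in> {l. length l = CARD('n) \<and> sum_list l = m}"
    define e where "e i = l ! (inv_into {0..<CARD('n)} g i)" for i
    have "\<phi> e = l" unfolding \<phi>_def e_def using l g
      by (auto intro!: nth_equalityI simp: bij_betw_inv_into_left)
    then show "\<exists>x\<in>monomials_deg m. l = \<phi> x" using l sumeq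
      by (metis (mono_tags, lifting) mem_Collect_eq monomials_deg_def)
  qed
  then have "card (monomials_deg m :: ('n \<Rightarrow> nat) set) = card {l. size l = CARD('n) \<and> sum_list l = m}"
    by (rule bij_betw_same_card)
  also have "\<dots> = (m + CARD('n) - 1) choose m" by (rule card_length_sum_list)
  finally show ?thesis .
qed


lemma forms_subspace: "coeff_vs.subspace (forms_deg m :: (('n::finite \<Rightarrow> nat) \<Rightarrow> 'k::field) set)"
  by (rule coeff_vs.subspaceI) (auto simp: forms_deg_def)

definition delta :: "('n \<Rightarrow> nat) \<Rightarrow> ('n \<Rightarrow> nat) \<Rightarrow> 'k::field" where
  "delta e = (\<lambda>e'. if e' = e then 1 else 0)"

lemma delta_inj: "inj (delta :: ('n \<Rightarrow> nat) \<Rightarrow> ('n \<Rightarrow> nat) \<Rightarrow> 'k::field)"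
  by (rule injI) (metis delta_def zero_neq_one)

lemma forms_span: "forms_deg m = coeff_vs.span ((delta :: ('n::finite \<Rightarrow> nat) \<Rightarrow> _ \<Rightarrow> 'k::field) ` monomials_deg m)"
proof
  show "forms_deg m \<subseteq> coeff_vs.span ((delta :: ('n::finite \<Rightarrow> nat) \<Rightarrow> _ \<Rightarrow> 'k::field) ` monomials_deg m)"
  proof
    fix F :: "('n \<Rightarrow> nat) \<Rightarrow> 'k" assume F: "F \<in> forms_deg m"
    have "F = (\<Sum>e\<in>monomials_deg m. (\<lambda>x. F e * delta e x))"
    proof
      fix x
      have "(\<Sum>e\<in>monomials_deg m. (\<lambda>x. F e * delta e x)) x = (\<Sum>e\<in>monomials_deg m. F e * delta e x)"
        by (simp add: fun_sum_apply)
      also have "\<dots> = (if x \<in> monomials_deg m then F x else 0)"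
        by (simp add: delta_def finite_monomials if_distrib cong: if_cong)
      also have "\<dots> = F x" using F by (auto simp: forms_deg_def)
      finally show "F x = (\<Sum>e\<in>monomials_deg m. (\<lambda>x. F e * delta e x)) x" by simp
    qed
    also have "\<dots> \<in> coeff_vs.span (delta ` monomials_deg m)"
      by (intro coeff_vs.span_sum coeff_vs.span_scale coeff_vs.span_base) auto
    finally show "F \<in> coeff_vs.span (delta ` monomials_deg m)" .
  qed
  show "coeff_vs.span ((delta :: ('n::finite \<Rightarrow> nat) \<Rightarrow> _ \<Rightarrow> 'k::field) ` monomials_deg m) \<subseteq> forms_deg m"
    by (rule coeff_vs.span_minimal[OF _ forms_subspace]) (auto simp: forms_deg_def delta_def)
qed

lemma delta_indep: "coeff_vs.independent ((delta :: ('n::finite \<Rightarrow> nat) \<Rightarrow> _ \<Rightarrow> 'k::field) ` monomials_deg m)"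
proof (rule coeff_vs.independent_if_scalars_zero)
  show "finite ((delta :: ('n::finite \<Rightarrow> nat) \<Rightarrow> _ \<Rightarrow> 'k::field) ` monomials_deg m)"
    by (simp add: finite_monomials)
  fix f :: "(('n \<Rightarrow> nat) \<Rightarrow> 'k) \<Rightarrow> 'k" and x :: "('n \<Rightarrow> nat) \<Rightarrow> 'k" assume eq: "(\<Sum>x\<in>(delta :: ('n::finite \<Rightarrow> nat) \<Rightarrow> _ \<Rightarrow> 'k::field) ` monomials_deg m. (\<lambda>y. f x * x y)) = 0"
    and x: "x \<in> delta ` monomials_deg m"
  then obtain e where e: "x = delta e" "e \<in> monomials_deg m" by auto
  have "0 = (\<Sum>x\<in>(delta :: ('n::finite \<Rightarrow> nat) \<Rightarrow> _ \<Rightarrow> 'k::field) ` monomials_deg m. (\<lambda>y. f x * x y)) (e :: 'n \<Rightarrow> nat)"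
    using eq by simp
  also have "\<dots> = (\<Sum>e'\<in>monomials_deg m. f (delta e') * delta e' e)"
    by (simp add: fun_sum_apply sum.reindex[OF inj_on_subset[OF delta_inj]])
  also have "\<dots> = f (delta e)"
    using e by (simp add: delta_def finite_monomials if_distrib cong: if_cong)
  finally show "f x = 0" using e by simp
qed

lemma dim_forms: "coeff_vs.dim (forms_deg m :: (('n::finite \<Rightarrow> nat) \<Rightarrow> 'k::field) set) = card (monomials_deg m :: ('n \<Rightarrow> nat) set)"
proof -
  have "coeff_vs.dim (forms_deg m :: (('n::finite \<Rightarrow> nat) \<Rightarrow> 'k::field) set) = card ((delta :: ('n::finite \<Rightarrow> nat) \<Rightarrow> _ \<Rightarrow> 'k::field) ` monomials_deg m)"
    by (metis coeff_vs.dim_span_eq_card_independent delta_indep forms_span)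
  also have "\<dots> = card (monomials_deg m :: ('n \<Rightarrow> nat) set)"
    by (rule card_image[OF inj_on_subset[OF delta_inj]]) simp
  finally show ?thesis .
qed


lemma eval_add: "eval_form m (F + G) p = eval_form m F p + eval_form m G p"
  by (simp add: eval_form_def sum.distrib algebra_simps)

lemma eval_scale: "eval_form m (\<lambda>x. a * F x) p = a * eval_form m F p"
  by (simp add: eval_form_def sum_distrib_left algebra_simps)

lemma eval_zero: "eval_form m 0 p = 0"
  by (simp add: eval_form_def)

lemma eval_diff: "eval_form m (F - G) p = eval_form m F p - eval_form m G p"
  by (simp add: eval_form_def sum_subtractf algebra_simps)

lemma vanish_subspace: "coeff_vs.subspace {F. eval_form m F p = 0}"
  by (rule coeff_vs.subspaceI) (auto simp: eval_add eval_scale eval_zero)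

lemma span_vanish:
  assumes "\<forall>G\<in>A. eval_form m G p = 0" "G \<in> coeff_vs.span A"
  shows "eval_form m G p = 0"
  using coeff_vs.span_minimal[OF _ vanish_subspace, of A m p] assms by auto

fun tri :: "nat \<Rightarrow> (('k::field ^ 'n::finite) \<times> (('n \<Rightarrow> nat) \<Rightarrow> 'k)) list \<Rightarrow> bool" where
  "tri m [] = True"
| "tri m ((p,F)#xs) = (tri m xs \<and> F \<in> forms_deg m \<and> eval_form m F p \<noteq> 0 \<and>
     (\<forall>q\<in>fst ` set xs. eval_form m F q = 0))"

lemma tri_forms: "tri m xs \<Longrightarrow> snd ` set xs \<subseteq> forms_deg m"
  by (induction xs rule: tri.induct) auto

lemma tri_indep:
  assumes "tri m xs" "coeff_vs.independent A" "finite A"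
    "\<forall>G\<in>A. \<forall>q\<in>fst ` set xs. eval_form m G q = 0"
  shows "coeff_vs.independent (A \<union> snd ` set xs) \<and> card (A \<union> snd ` set xs) = card A + length xs"
  using assms
proof (induction xs arbitrary: A)
  case Nil then show ?case by simp
next
  case (Cons a ys)
  obtain p F where a: "a = (p, F)" by (cases a)
  have F: "tri m ys" "eval_form m F p \<noteq> 0" "\<forall>q\<in>fst ` set ys. eval_form m F q = 0"
    using Cons.prems a by auto
  have "F \<notin> coeff_vs.span A"
    using span_vanish[of A m p F] Cons.prems(4) F(2) a by auto
  then have ind: "coeff_vs.independent (insert F A)" and FA: "F \<notin> A"
    using coeff_vs.independent_insertI[OF _ Cons.prems(2)] coeff_vs.span_base[of F A] by auto
  have "coeff_vs.independent (insert F A \<union> snd ` set ys) \<and>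
        card (insert F A \<union> snd ` set ys) = card (insert F A) + length ys"
    using Cons.IH[OF F(1) ind] Cons.prems F(3) a by auto
  moreover have "insert F A \<union> snd ` set ys = A \<union> snd ` set (a # ys)" using a by auto
  moreover have "card (insert F A) = Suc (card A)" using FA Cons.prems(3) by simp
  ultimately show ?case by simp
qed

lemma tri_span:
  assumes "tri m xs" "F \<in> forms_deg m"
  shows "\<exists>G\<in>coeff_vs.span (snd ` set xs). \<forall>q\<in>fst ` set xs. eval_form m F q = eval_form m G q"
  using assms
proof (induction xs)
  case Nil then show ?case by simp
next
  case (Cons a ys)
  obtain p Fp where a: "a = (p, Fp)" by (cases a)
  have F: "tri m ys" "eval_form m Fp p \<noteq> 0" "\<forall>q\<in>fst ` set ys. eval_form m Fp q = 0"
    using Cons.prems a by auto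
  obtain G' where G': "G' \<in> coeff_vs.span (snd ` set ys)" "\<forall>q\<in>fst ` set ys. eval_form m F q = eval_form m G' q"
    using Cons.IH[OF F(1) Cons.prems(2)] by blast
  define c where "c = (eval_form m F p - eval_form m G' p) / eval_form m Fp p"
  define G where "G = G' + (\<lambda>x. c * Fp x)"
  have Gs: "G \<in> coeff_vs.span (snd ` set (a#ys))"
  proof -
    have "Fp \<in> snd ` set (a#ys)" using a by force
    then have 1: "(\<lambda>x. c * Fp x) \<in> coeff_vs.span (snd ` set (a#ys))"
      by (intro coeff_vs.span_scale coeff_vs.span_base)
    have "snd ` set ys \<subseteq> snd ` set (a#ys)" by auto
    then have 2: "G' \<in> coeff_vs.span (snd ` set (a#ys))"
      using G'(1) coeff_vs.span_mono by blast
    show ?thesis unfolding G_def by (rule coeff_vs.span_add[OF 2 1])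
  qed
  have ev: "eval_form m G q = eval_form m G' q + c * eval_form m Fp q" for q
    by (simp add: G_def eval_add eval_scale)
  have "\<forall>q\<in>fst ` set (a#ys). eval_form m F q = eval_form m G q"
    using G'(2) F(2,3) a by (auto simp: ev c_def)
  then show ?case using Gs by blast
qed

definition VW :: "('k::field ^ 'n::finite) set \<Rightarrow> nat \<Rightarrow> _" where
  "VW \<Gamma> m = {F :: ('n \<Rightarrow> nat) \<Rightarrow> 'k. F \<in> forms_deg m \<and> (\<forall>p\<in>\<Gamma>. eval_form m F p = 0)}"

lemma h0_upper:
  fixes \<Gamma> :: "('k::field ^ 'n::finite) set" and xs :: "(('k ^ 'n) \<times> (('n \<Rightarrow> nat) \<Rightarrow> 'k)) list"
  assumes "tri m xs" "fst ` set xs \<subseteq> \<Gamma>"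
  shows "h0_ideal_sheaf \<Gamma> m + length xs \<le> card (monomials_deg m :: ('n \<Rightarrow> nat) set)"
proof -
  obtain B where B: "B \<subseteq> VW \<Gamma> m" "coeff_vs.independent B" "VW \<Gamma> m \<subseteq> coeff_vs.span B"
     "card B = coeff_vs.dim (VW \<Gamma> m)"
    using coeff_vs.basis_exists by blast
  have Bf: "B \<subseteq> forms_deg m" using B(1) by (auto simp: VW_def)
  have fin: "finite ((delta :: ('n::finite \<Rightarrow> nat) \<Rightarrow> _ \<Rightarrow> 'k::field) ` monomials_deg m)"
    by (simp add: finite_monomials)
  have finB: "finite B"
    using coeff_vs.independent_span_bound[OF fin B(2)] Bf forms_span by blast
  have vanB: "\<forall>G\<in>B. \<forall>q\<in>fst ` set xs. eval_form m G q = 0"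
    using B(1) assms(2) by (auto simp: VW_def)
  note T = tri_indep[OF assms(1) B(2) finB vanB]
  have "B \<union> snd ` set xs \<subseteq> forms_deg m" using Bf tri_forms[OF assms(1)] by auto
  then have "card (B \<union> snd ` set xs) \<le> card ((delta :: ('n::finite \<Rightarrow> nat) \<Rightarrow> _ \<Rightarrow> 'k::field) ` monomials_deg m)"
    using coeff_vs.independent_span_bound[OF fin] T forms_span by blast
  also have "\<dots> = card (monomials_deg m :: ('n \<Rightarrow> nat) set)"
    by (rule card_image[OF inj_on_subset[OF delta_inj]]) simp
  finally have "card B + length xs \<le> card (monomials_deg m :: ('n \<Rightarrow> nat) set)" using T by simp
  moreover have "card B = h0_ideal_sheaf \<Gamma> m" using B(4) unfolding h0_ideal_sheaf_def VW_def by simp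
  ultimately show ?thesis by simp
qed

lemma h0_lower:
  fixes \<Gamma> :: "('k::field ^ 'n::finite) set" and xs :: "(('k ^ 'n) \<times> (('n \<Rightarrow> nat) \<Rightarrow> 'k)) list"
  assumes "tri m xs" "\<Gamma> \<subseteq> fst ` set xs"
  shows "card (monomials_deg m :: ('n \<Rightarrow> nat) set) \<le> h0_ideal_sheaf \<Gamma> m + length xs"
proof -
  obtain B where B: "B \<subseteq> VW \<Gamma> m" "coeff_vs.independent B" "VW \<Gamma> m \<subseteq> coeff_vs.span B"
     "card B = coeff_vs.dim (VW \<Gamma> m)"
    using coeff_vs.basis_exists by blast
  have Bf: "B \<subseteq> forms_deg m" using B(1) by (auto simp: VW_def)
  have fin: "finite ((delta :: ('n::finite \<Rightarrow> nat) \<Rightarrow> _ \<Rightarrow> 'k::field) ` monomials_deg m)"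
    by (simp add: finite_monomials)
  have finB: "finite B"
    using coeff_vs.independent_span_bound[OF fin B(2)] Bf forms_span by blast
  have sp: "forms_deg m \<subseteq> coeff_vs.span (B \<union> snd ` set xs)"
  proof
    fix F :: "('n \<Rightarrow> nat) \<Rightarrow> 'k" assume F: "F \<in> forms_deg m"
    obtain G where G: "G \<in> coeff_vs.span (snd ` set xs)" "\<forall>q\<in>fst ` set xs. eval_form m F q = eval_form m G q"
      using tri_span[OF assms(1) F] by blast
    have Gf: "G \<in> forms_deg m"
      using coeff_vs.span_minimal[OF tri_forms[OF assms(1)] forms_subspace] G(1) by auto
    have "F - G \<in> VW \<Gamma> m"
      using F Gf G(2) assms(2) coeff_vs.subspace_diff[OF forms_subspace]
      by (auto simp: VW_def eval_diff)
    then have "F - G \<in> coeff_vs.span (B \<union> snd ` set xs)"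
      using B(3) coeff_vs.span_mono[of B "B \<union> snd ` set xs"] by auto
    moreover have "G \<in> coeff_vs.span (B \<union> snd ` set xs)"
      using G(1) coeff_vs.span_mono[of "snd ` set xs" "B \<union> snd ` set xs"] by auto
    ultimately have "(F - G) + G \<in> coeff_vs.span (B \<union> snd ` set xs)"
      by (rule coeff_vs.span_add)
    then show "F \<in> coeff_vs.span (B \<union> snd ` set xs)" by simp
  qed
  have "coeff_vs.dim (forms_deg m :: (('n::finite \<Rightarrow> nat) \<Rightarrow> 'k::field) set) \<le> card (B \<union> snd ` set xs)"
    by (rule coeff_vs.dim_le_card[OF sp]) (simp add: finB)
  also have "\<dots> \<le> card B + card (snd ` set xs)" by (rule card_Un_le)
  also have "\<dots> \<le> card B + length xs"
    using card_image_le[of "set xs" snd] card_length[of xs] by simp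
  finally have "coeff_vs.dim (forms_deg m :: (('n::finite \<Rightarrow> nat) \<Rightarrow> 'k::field) set) \<le> card B + length xs" .
  moreover have "card B = h0_ideal_sheaf \<Gamma> m" using B(4) unfolding h0_ideal_sheaf_def VW_def by simp
  ultimately show ?thesis using dim_forms[where 'k='k and 'n='n and m=m] by simp
qed


definition rep :: "nat \<Rightarrow> ('k::field ^ 'n::finite \<Rightarrow> 'k) \<Rightarrow> bool" where
  "rep m f \<longleftrightarrow> (\<exists>F\<in>forms_deg m. \<forall>x. eval_form m F x = f x)"

lemma rep_zero: "rep m (\<lambda>x. 0)"
  unfolding rep_def by (rule bexI[of _ 0]) (auto simp: forms_deg_def eval_zero)

lemma rep_add: "rep m f \<Longrightarrow> rep m g \<Longrightarrow> rep m (\<lambda>x. f x + g x)"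
  unfolding rep_def
proof (elim bexE)
  fix F G assume "F \<in> forms_deg m" "\<forall>x. eval_form m F x = f x" "G \<in> forms_deg m" "\<forall>x. eval_form m G x = g x"
  then show "\<exists>H\<in>forms_deg m. \<forall>x. eval_form m H x = f x + g x"
    by (intro bexI[of _ "F + G"]) (auto simp: eval_add forms_deg_def)
qed

lemma rep_scale: "rep m f \<Longrightarrow> rep m (\<lambda>x. a * f x)"
  unfolding rep_def
proof (elim bexE)
  fix F assume "F \<in> forms_deg m" "\<forall>x. eval_form m F x = f x"
  then show "\<exists>H\<in>forms_deg m. \<forall>x. eval_form m H x = a * f x"
    by (intro bexI[of _ "\<lambda>e. a * F e"]) (auto simp: eval_scale forms_deg_def)
qed

lemma rep_sum: "(\<And>i. i \<in> I \<Longrightarrow> rep m (f i)) \<Longrightarrow> rep m (\<lambda>x. \<Sum>i\<in>I. f i x)"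
proof (induction I rule: infinite_finite_induct)
  case (infinite A) then show ?case by (simp add: rep_zero)
next
  case empty then show ?case by (simp add: rep_zero)
next
  case (insert a A) then show ?case by (simp add: rep_add)
qed

lemma rep_one: "rep 0 (\<lambda>x::'k::field ^ 'n::finite. 1)"
proof -
  have mon: "monomials_deg 0 = {(\<lambda>_. 0) :: 'n::finite \<Rightarrow> nat}"
    by (auto simp: monomials_deg_def)
  show ?thesis unfolding rep_def
    by (rule bexI[of _ "delta (\<lambda>_. 0)"]) (auto simp: eval_form_def mon delta_def forms_deg_def)
qed

lemma sum_upd: "(\<Sum>j\<in>UNIV. (e(i := k)) j) = k + (\<Sum>j\<in>UNIV. e j) - e i" for e :: "'n::finite \<Rightarrow> nat"
proof -
  have "(\<Sum>j\<in>UNIV. (e(i := k)) j) = k + (\<Sum>j\<in>UNIV - {i}. e j)"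
    by (simp add: sum.remove[of UNIV i])
  moreover have "(\<Sum>j\<in>UNIV. e j) = e i + (\<Sum>j\<in>UNIV - {i}. e j)"
    by (simp add: sum.remove[of UNIV i])
  ultimately show ?thesis by simp
qed

lemma prod_upd: "(\<Prod>j\<in>UNIV. (x $ j) ^ ((e(i := Suc (e i))) j)) = x $ i * (\<Prod>j\<in>UNIV. (x $ j) ^ (e j))"
  for e :: "'n::finite \<Rightarrow> nat" and x :: "'k::field ^ 'n"
proof -
  have "(\<Prod>j\<in>UNIV. (x $ j) ^ ((e(i := Suc (e i))) j)) = (x $ i) ^ Suc (e i) * (\<Prod>j\<in>UNIV - {i}. (x $ j) ^ (e j))"
    by (simp add: prod.remove[of UNIV i])
  moreover have "(\<Prod>j\<in>UNIV. (x $ j) ^ (e j)) = (x $ i) ^ e i * (\<Prod>j\<in>UNIV - {i}. (x $ j) ^ (e j))"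
    by (simp add: prod.remove[of UNIV i])
  ultimately show ?thesis by simp
qed

lemma rep_mulx:
  fixes f :: "'k::field ^ 'n::finite \<Rightarrow> 'k"
  assumes "rep m f" shows "rep (Suc m) (\<lambda>x. x $ i * f x)"
proof -
  obtain F where F: "F \<in> forms_deg m" "\<forall>x. eval_form m F x = f x" using assms rep_def by blast
  define G where "G e = (if e i > 0 then F (e(i := e i - 1)) else 0)" for e :: "'n \<Rightarrow> nat"
  define \<psi> where "\<psi> e = e(i := Suc (e i))" for e :: "'n \<Rightarrow> nat"
  have G: "G \<in> forms_deg (Suc m)"
    unfolding forms_deg_def
  proof (intro CollectI allI impI)
    fix e :: "'n \<Rightarrow> nat" assume e: "e \<notin> monomials_deg (Suc m)"
    show "G e = 0"
    proof (cases "e i > 0")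
      case True
      have "sum (e(i := e i - 1)) UNIV \<noteq> m"
        using e True sum_upd[of e i "e i - 1"] member_le_sum[of i UNIV e] unfolding monomials_deg_def by simp
      then show ?thesis using F(1) True unfolding G_def forms_deg_def monomials_deg_def by auto
    qed (simp add: G_def)
  qed
  have s1: "sum (\<psi> e) UNIV = Suc (sum e UNIV)" for e :: "'n \<Rightarrow> nat"
  proof -
    have "sum (\<psi> e) UNIV = Suc (e i) + sum e UNIV - e i" unfolding \<psi>_def by (rule sum_upd)
    then show ?thesis using member_le_sum[of i UNIV e] by simp
  qed
  have s2: "sum (e(i := e i - 1)) UNIV = sum e UNIV - 1" if "e i > 0" for e :: "'n \<Rightarrow> nat"
  proof -
    have "sum (e(i := e i - 1)) UNIV = (e i - 1) + sum e UNIV - e i" by (rule sum_upd)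
    then show ?thesis using member_le_sum[of i UNIV e] that by simp
  qed
  have bij: "bij_betw \<psi> (monomials_deg m) {e \<in> monomials_deg (Suc m). e i > 0}"
  proof (rule bij_betwI[where g = "\<lambda>e. e(i := e i - 1)"])
    show "\<psi> \<in> monomials_deg m \<rightarrow> {e \<in> monomials_deg (Suc m). 0 < e i}"
      using s1 unfolding monomials_deg_def by (auto simp: \<psi>_def)
    show "(\<lambda>e. e(i := e i - 1)) \<in> {e \<in> monomials_deg (Suc m). 0 < e i} \<rightarrow> monomials_deg m"
      using s2 unfolding monomials_deg_def by auto
  qed (auto simp: \<psi>_def)
  have "eval_form (Suc m) G x = x $ i * f x" for x
  proof -
    have "eval_form (Suc m) G x = (\<Sum>e\<in>{e \<in> monomials_deg (Suc m). e i > 0}. G e * (\<Prod>j\<in>UNIV. (x $ j) ^ e j))"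
      unfolding eval_form_def by (rule sum.mono_neutral_right) (auto simp: finite_monomials G_def)
    also have "\<dots> = (\<Sum>e\<in>monomials_deg m. G (\<psi> e) * (\<Prod>j\<in>UNIV. (x $ j) ^ (\<psi> e) j))"
      by (rule sum.reindex_bij_betw[OF bij, symmetric])
    also have "\<dots> = (\<Sum>e\<in>monomials_deg m. x $ i * (F e * (\<Prod>j\<in>UNIV. (x $ j) ^ e j)))"
    proof (rule sum.cong[OF refl])
      fix e :: "'n \<Rightarrow> nat" assume "e \<in> monomials_deg m"
      have 1: "G (\<psi> e) = F e" by (simp add: G_def \<psi>_def)
      have 2: "(\<Prod>j\<in>UNIV. (x $ j) ^ (\<psi> e) j) = x $ i * (\<Prod>j\<in>UNIV. (x $ j) ^ e j)"
        unfolding \<psi>_def by (rule prod_upd)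
      show "G (\<psi> e) * (\<Prod>j\<in>UNIV. (x $ j) ^ (\<psi> e) j) = x $ i * (F e * (\<Prod>j\<in>UNIV. (x $ j) ^ e j))"
        unfolding 1 2 by simp
    qed
    also have "\<dots> = x $ i * eval_form m F x" by (simp add: eval_form_def sum_distrib_left)
    also have "\<dots> = x $ i * f x" using F(2) by simp
    finally show ?thesis .
  qed
  then show ?thesis using G unfolding rep_def by blast
qed

definition lin :: "'k::field ^ 'n::finite \<Rightarrow> 'k ^ 'n \<Rightarrow> 'k" where
  "lin h x = (\<Sum>j\<in>UNIV. h $ j * x $ j)"

lemma rep_lin_mul: "rep m f \<Longrightarrow> rep (Suc m) (\<lambda>x. lin h x * f x)"
proof -
  assume "rep m f"
  then have "rep (Suc m) (\<lambda>x. \<Sum>j\<in>UNIV. h $ j * (x $ j * f x))"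
    by (intro rep_sum rep_scale rep_mulx)
  then show ?thesis by (simp add: lin_def sum_distrib_right mult.assoc)
qed

lemma rep_pow: "rep m f \<Longrightarrow> rep (m + k) (\<lambda>x. (x $ i) ^ k * f x)"
proof (induction k)
  case 0 then show ?case by simp
next
  case (Suc k)
  then have "rep (Suc (m + k)) (\<lambda>x. x $ i * ((x $ i) ^ k * f x))" by (intro rep_mulx) simp
  then show ?case by (simp add: mult.assoc)
qed

lemma separate:
  fixes p :: "'k::field ^ 'n::finite"
  assumes "p \<notin> vec.span A"
  shows "\<exists>h. (\<forall>a\<in>vec.span A. lin h a = 0) \<and> lin h p \<noteq> 0"
proof -
  obtain B where B: "B \<subseteq> A" "vec.independent B" "A \<subseteq> vec.span B"
    using vec.maximal_independent_subset by blast
  have spB: "vec.span A = vec.span B"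
    using B vec.span_mono vec.span_minimal vec.subspace_span by (metis subset_antisym vec.span_span)
  have "vec.independent (insert p B)"
    using vec.independent_insertI[OF _ B(2)] assms spB by simp
  obtain i0 :: 'n where True by simp
  obtain g where g: "Vector_Spaces.linear (*s) (*s) g"
    "\<forall>x\<in>insert p B. g x = (if x = p then axis i0 1 else 0)"
    using vec.linear_independent_extend[OF \<open>vec.independent (insert p B)\<close>, of "\<lambda>x. if x = p then axis i0 1 else 0"] by blast
  define h :: "'k ^ 'n" where "h = (\<chi> j. g (axis j 1) $ i0)"
  have linh: "lin h x = g x $ i0" for x
    unfolding lin_def h_def using Cartesian_Space.linear_componentwise[OF g(1), of x i0]
    by (simp add: mult.commute)
  have pB: "p \<notin> B" using assms B(1) vec.span_base by blast
  have gB: "g x = 0" if "x \<in> B" for x using g(2) pB that by auto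
  have "g a = 0" if "a \<in> vec.span A" for a
    using vec.linear_eq_0_on_span[OF g(1), of B a] gB that spB by auto
  moreover have "g p $ i0 = 1" using g(2) by (simp add: axis_def)
  ultimately show ?thesis using linh by (intro exI[of _ h]) auto
qed



lemma indep_inter_zero:
  fixes S :: "('k::field ^ 'n::finite) set"
  assumes ind: "vec.independent S" and x: "x \<in> vec.span S"
    and all: "\<forall>s\<in>S. x \<in> vec.span (S - {s})"
  shows "x = 0"
proof -
  have fin: "finite S" using ind vec.finiteI_independent by blast
  have key: "x \<in> vec.span (S - T)" if "T \<subseteq> S" for T
  proof -
    have "finite T" using that fin finite_subset by blast
    then show ?thesis using that
    proof (induction T rule: finite_induct)
      case empty then show ?case using x by simp
    next
      case (insert t T)
      let ?A = "S - T"
      have IH: "x \<in> vec.span ?A" using insert by auto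
      have tA: "t \<in> ?A" using insert by auto
      have xt: "x \<in> vec.span (S - {t})" using all insert by auto
      show ?case
      proof (rule ccontr)
        assume nx: "x \<notin> vec.span (S - insert t T)"
        have eq: "S - insert t T = ?A - {t}" by auto
        have "?A = insert t (?A - {t})" using tA by auto
        then have "x \<in> vec.span (insert t (?A - {t}))" using IH by simp
        then have "t \<in> vec.span (insert x (?A - {t}))"
          using vec.in_span_insert nx eq by metis
        moreover have "insert x (?A - {t}) \<subseteq> vec.span (S - {t})"
          using xt vec.span_superset[of "S - {t}"] by auto
        then have "vec.span (insert x (?A - {t})) \<subseteq> vec.span (S - {t})"
          using vec.span_mono[of "insert x (?A - {t})" "vec.span (S - {t})"] vec.span_span[of "S - {t}"] by simp
        ultimately have "t \<in> vec.span (S - {t})" by blast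
        then show False using ind tA vec.dependent_def by blast
      qed
    qed
  qed
  show ?thesis using key[of S] by simp
qed

locale lsup =
  fixes \<Gamma> :: "('k::field ^ 'n::finite) set" and \<nu> :: "nat \<Rightarrow> nat"
  assumes proj: "proj_point_set \<Gamma>" and spans: "vec.span \<Gamma> = UNIV"
    and unif: "\<And>i S. i \<le> CARD('n) - 1 \<Longrightarrow> S \<subseteq> \<Gamma> \<Longrightarrow> vec.independent S \<Longrightarrow> card S = i + 1 \<Longrightarrow>
        card {p\<in>\<Gamma>. p \<in> vec.span S} = \<nu> i"
begin

definition cl :: "('k ^ 'n) set \<Rightarrow> ('k ^ 'n) set" where
  "cl S = {p\<in>\<Gamma>. p \<in> vec.span S}"

lemma finG: "finite \<Gamma>" using proj proj_point_set_def by blast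
lemma zeroG: "0 \<notin> \<Gamma>" using proj proj_point_set_def by blast
lemma projeq: "p \<in> \<Gamma> \<Longrightarrow> q \<in> \<Gamma> \<Longrightarrow> q = a *s p \<Longrightarrow> q = p"
  using proj unfolding proj_point_set_def by blast

lemma cl_sub: "cl S \<subseteq> \<Gamma>" by (auto simp: cl_def)
lemma fin_cl: "finite (cl S)" using finG cl_sub finite_subset by blast
lemma sub_cl: "S \<subseteq> \<Gamma> \<Longrightarrow> S \<subseteq> cl S" using vec.span_superset by (auto simp: cl_def)
lemma cl_mono: "S \<subseteq> T \<Longrightarrow> cl S \<subseteq> cl T" using vec.span_mono by (auto simp: cl_def)

lemma indep_card: "vec.independent (S :: ('k ^ 'n) set) \<Longrightarrow> finite S \<and> card S \<le> CARD('n)"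
proof -
  assume S: "vec.independent S"
  have a: "card S \<le> vec.dim (UNIV :: ('k ^ 'n) set)" by (rule vec.independent_card_le_dim) (auto simp: S)
  have b: "vec.dim (UNIV :: ('k ^ 'n) set) = CARD('n)" by (simp add: card_cart_basis)
  from a b have "card S \<le> CARD('n)" by (simp only:)
  then show ?thesis using vec.finiteI_independent[OF S] by simp
qed

lemma card_cl: "S \<subseteq> \<Gamma> \<Longrightarrow> vec.independent S \<Longrightarrow> card S = i + 1 \<Longrightarrow> card (cl S) = \<nu> i"
proof -
  assume S: "S \<subseteq> \<Gamma>" "vec.independent S" "card S = i + 1"
  then have "i \<le> CARD('n) - 1" using indep_card[of S] by linarith
  then show ?thesis using unif[of i S] S unfolding cl_def by simp
qed

lemma exists_indep: "r \<le> CARD('n) \<Longrightarrow> \<exists>S\<subseteq>\<Gamma>. vec.independent S \<and> card S = r"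
proof -
  assume r: "r \<le> CARD('n)"
  obtain B where B: "B \<subseteq> \<Gamma>" "vec.independent B" "\<Gamma> \<subseteq> vec.span B"
    using vec.maximal_independent_subset by blast
  have "vec.span B = UNIV"
    using B(3) spans vec.span_mono vec.span_span by (metis top.extremum_uniqueI)
  then have "card B = CARD('n)"
    using vec.dim_span_eq_card_independent[OF B(2)] vec.dim_UNIV card_cart_basis by metis
  then obtain T where "T \<subseteq> B" "card T = r" using r obtain_subset_with_card_n by metis
  then show ?thesis using B vec.independent_mono by blast
qed

lemma nu_ge: "i \<le> CARD('n) - 1 \<Longrightarrow> \<nu> i \<ge> i + 1"
proof -
  assume i: "i \<le> CARD('n) - 1"
  then obtain S where S: "S \<subseteq> \<Gamma>" "vec.independent S" "card S = i + 1"
    using exists_indep[of "i+1"] by (metis Suc_eq_plus1 Suc_pred' le_imp_less_Suc less_eq_Suc_le zero_less_card_finite)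
  then have "card S \<le> card (cl S)" using card_mono[OF fin_cl sub_cl] by blast
  then show ?thesis using card_cl[OF S] S(3) by simp
qed

lemma cl_single: "s \<in> \<Gamma> \<Longrightarrow> cl {s} = {s}"
  using projeq sub_cl[of "{s}"] by (auto simp: cl_def vec.span_singleton)

lemma strict: assumes "1 \<le> j" "j \<le> CARD('n) - 1" shows "\<nu> j \<ge> \<nu> (j - 1) + 1"
proof -
  obtain S where S: "S \<subseteq> \<Gamma>" "vec.independent S" "card S = j + 1"
    using exists_indep[of "j+1"] assms by (metis Suc_eq_plus1 Suc_pred' le_imp_less_Suc less_eq_Suc_le zero_less_card_finite)
  then obtain s where s: "s \<in> S" by fastforce
  have S': "S - {s} \<subseteq> \<Gamma>" "vec.independent (S - {s})" "card (S - {s}) = (j - 1) + 1"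
    using S s vec.independent_mono[OF S(2), of "S - {s}"] assms by auto
  have "s \<notin> vec.span (S - {s})" using S(2) s vec.dependent_def by blast
  then have "s \<in> cl S - cl (S - {s})" using s S(1) sub_cl[OF S(1)] by (auto simp: cl_def)
  moreover have "cl (S - {s}) \<subseteq> cl S" by (rule cl_mono) auto
  ultimately have "card (cl (S - {s})) < card (cl S)"
    by (metis Diff_iff fin_cl psubsetI psubset_card_mono)
  then show ?thesis using card_cl[OF S] card_cl[OF S'] by simp
qed

lemma GP: assumes "1 \<le> j" "j \<le> CARD('n) - 1" "\<nu> j = \<nu> (j - 1) + 1" shows "\<nu> j = j + 1"
proof -
  obtain S where S: "S \<subseteq> \<Gamma>" "vec.independent S" "card S = j + 1"
    using exists_indep[of "j+1"] assms by (metis Suc_eq_plus1 Suc_pred' le_imp_less_Suc less_eq_Suc_le zero_less_card_finite)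
  have single: "cl S - cl (S - {s}) = {s}" if s: "s \<in> S" for s
  proof -
    have S': "S - {s} \<subseteq> \<Gamma>" "vec.independent (S - {s})" "card (S - {s}) = (j - 1) + 1"
      using S s vec.independent_mono[OF S(2), of "S - {s}"] assms by auto
    have "s \<notin> vec.span (S - {s})" using S(2) s vec.dependent_def by blast
    then have sin: "s \<in> cl S - cl (S - {s})" using s S(1) sub_cl[OF S(1)] by (auto simp: cl_def)
    have sub: "cl (S - {s}) \<subseteq> cl S" by (rule cl_mono) auto
    have "card (cl S - cl (S - {s})) = 1"
      using card_Diff_subset[OF fin_cl sub] card_cl[OF S] card_cl[OF S'] assms(3) by simp
    then show ?thesis using sin by (metis card_1_singletonE singletonD)
  qed
  have "cl S \<subseteq> S"
  proof
    fix x assume x: "x \<in> cl S"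
    show "x \<in> S"
    proof (rule ccontr)
      assume "x \<notin> S"
      have "x \<in> vec.span (S - {s})" if s: "s \<in> S" for s
      proof (rule ccontr)
        assume "x \<notin> vec.span (S - {s})"
        then have "x \<in> cl S - cl (S - {s})" using x by (auto simp: cl_def)
        then show False using single[OF s] \<open>x \<notin> S\<close> s by auto
      qed
      then have "\<forall>s\<in>S. x \<in> vec.span (S - {s})" by blast
      then have "x = 0" using indep_inter_zero[OF S(2)] x by (auto simp: cl_def)
      then show False using x zeroG cl_sub by auto
    qed
  qed
  then have "cl S = S" using sub_cl[OF S(1)] by auto
  then show ?thesis using card_cl[OF S] S(3) by simp
qed

lemma propagate:
  assumes "\<nu> k \<ge> k + 2" "k \<le> j" "j \<le> CARD('n) - 1"
  shows "\<nu> j \<ge> 2 * j - k + 2"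
proof -
  have "\<nu> (k + d) \<ge> 2 * (k + d) - k + 2" if "k + d \<le> CARD('n) - 1" for d
    using that
  proof (induction d)
    case 0 then show ?case using assms(1) by simp
  next
    case (Suc d)
    have s: "\<nu> (Suc (k + d)) \<ge> \<nu> (k + d) + 1" using strict[of "Suc (k + d)"] Suc.prems by simp
    have IH: "\<nu> (k + d) \<ge> 2 * (k + d) - k + 2" using Suc by simp
    have "\<nu> (Suc (k + d)) \<noteq> \<nu> (k + d) + 1"
    proof
      assume "\<nu> (Suc (k + d)) = \<nu> (k + d) + 1"
      then have "\<nu> (Suc (k + d)) = Suc (k + d) + 1" using GP[of "Suc (k + d)"] Suc.prems by simp
      then show False using IH s by simp
    qed
    then show ?case using s IH by simp
  qed
  from this[of "j - k"] show ?thesis using assms by simp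
qed

end


lemma tri_append:
  "tri m ys \<Longrightarrow> tri m xs \<Longrightarrow> (\<forall>F\<in>snd ` set ys. \<forall>q\<in>fst ` set xs. eval_form m F q = 0) \<Longrightarrow> tri m (ys @ xs)"
proof (induction ys)
  case Nil then show ?case by simp
next
  case (Cons a ys)
  obtain p F where a: "a = (p, F)" by (cases a)
  show ?case using Cons a by auto
qed

lemma tri_list:
  "distinct l \<Longrightarrow> (\<forall>b\<in>set l. Fb b \<in> forms_deg m \<and> eval_form m (Fb b) b \<noteq> 0 \<and>
      (\<forall>b'\<in>set l. b' \<noteq> b \<longrightarrow> eval_form m (Fb b) b' = 0)) \<Longrightarrow> tri m (map (\<lambda>b. (b, Fb b)) l)"
proof (induction l)
  case Nil then show ?case by simp
next
  case (Cons a l)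
  then show ?case by (auto simp: image_image)
qed

lemma tri_distinct: "tri m xs \<Longrightarrow> distinct (map fst xs)"
proof (induction xs)
  case Nil then show ?case by simp
next
  case (Cons a xs)
  obtain p F where a: "a = (p, F)" by (cases a)
  then show ?case using Cons by force
qed

lemma tri_lift:
  fixes xs :: "(('k::field ^ 'n::finite) \<times> (('n \<Rightarrow> nat) \<Rightarrow> 'k)) list"
  assumes "tri 2 xs" "0 \<notin> fst ` set xs" "m \<ge> 2"
  shows "\<exists>ys. tri m ys \<and> map fst ys = map fst xs"
  using assms(1,2)
proof (induction xs)
  case Nil then show ?case by (intro exI[of _ "[]"]) simp
next
  case (Cons a xs)
  obtain p F where a: "a = (p, F)" by (cases a)
  have pr: "tri 2 xs" "F \<in> forms_deg 2" "eval_form 2 F p \<noteq> 0" "\<forall>q\<in>fst ` set xs. eval_form 2 F q = 0"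
     "p \<noteq> 0" "0 \<notin> fst ` set xs"
    using Cons.prems a by auto
  obtain ys where ys: "tri m ys" "map fst ys = map fst xs" using Cons.IH pr(1,6) by blast
  obtain i where i: "p $ i \<noteq> 0" using pr(5) by (metis vec_eq_iff zero_index)
  have "rep 2 (eval_form 2 F)" unfolding rep_def using pr(2) by blast
  then have R: "rep (2 + (m - 2)) (\<lambda>x. (x $ i) ^ (m - 2) * eval_form 2 F x)" by (rule rep_pow)
  have eqm: "2 + (m - 2) = m" using assms(3) by simp
  have "rep m (\<lambda>x. (x $ i) ^ (m - 2) * eval_form 2 F x)" using R by (simp only: eqm)
  then obtain F' where F': "F' \<in> forms_deg m" "\<forall>x. eval_form m F' x = (x $ i) ^ (m - 2) * eval_form 2 F x"
    unfolding rep_def by blast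
  have "fst ` set ys = fst ` set xs" using ys(2) by (metis set_map)
  then have "tri m ((p, F') # ys)" using ys(1) F' pr(3,4) i by auto
  moreover have "map fst ((p, F') # ys) = map fst (a # xs)" using ys(2) a by simp
  ultimately show ?case by blast
qed

context lsup begin

lemma main:
  "r \<le> CARD('n) - 1 \<Longrightarrow> S \<subseteq> \<Gamma> \<Longrightarrow> vec.independent S \<Longrightarrow> card S = r + 1 \<Longrightarrow>
    \<exists>xs. tri 2 xs \<and> fst ` set xs \<subseteq> cl S \<and> length xs \<ge> min (\<nu> r) (2 * r + 1)"
proof (induction r arbitrary: S)
  case 0
  then obtain s where S: "S = {s}" by (metis One_nat_def add_0 card_1_singletonE)
  then have sG: "s \<in> \<Gamma>" using 0 by auto
  then have "s \<noteq> 0" using zeroG by auto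
  then obtain i where i: "s $ i \<noteq> 0" by (metis vec_eq_iff zero_index)
  have "rep (0 + 2) (\<lambda>x::'k^'n. (x $ i) ^ 2 * 1)" by (rule rep_pow[OF rep_one])
  then have "rep 2 (\<lambda>x::'k^'n. (x $ i) ^ 2 * 1)" by (simp only: add_0)
  then obtain F :: "('n \<Rightarrow> nat) \<Rightarrow> 'k" where F: "F \<in> forms_deg 2" "\<forall>x. eval_form 2 F x = (x $ i) ^ 2 * 1"
    unfolding rep_def by blast
  have "tri 2 [(s, F)]" using F i by simp
  moreover have "fst ` set [(s, F)] \<subseteq> cl S" using sub_cl[of S] S sG by auto
  ultimately show ?case by (intro exI[of _ "[(s, F)]"]) auto
next
  case (Suc r)
  note S = Suc.prems
  obtain s where s: "s \<in> S" using S(4) by fastforce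
  define S' where "S' = S - {s}"
  have S': "S' \<subseteq> \<Gamma>" "vec.independent S'" "card S' = r + 1" "r \<le> CARD('n) - 1"
    using S s vec.independent_mono[OF S(3), of S'] unfolding S'_def by auto
  obtain xs1 where xs1: "tri 2 xs1" "fst ` set xs1 \<subseteq> cl S'" "length xs1 \<ge> min (\<nu> r) (2 * r + 1)"
    using Suc.IH[OF S'(4) S'(1-3)] by blast
  define H where "H = cl S'"
  define G where "G = cl S"
  define D where "D = G - H"
  have HG: "H \<subseteq> G" unfolding H_def G_def S'_def by (rule cl_mono) auto
  have cardH: "card H = \<nu> r" unfolding H_def by (rule card_cl[OF S'(1-3)])
  have cardG: "card G = \<nu> (Suc r)" unfolding G_def using card_cl[OF S(2,3), of "Suc r"] S(4) by simp
  have cardD: "card D = \<nu> (Suc r) - \<nu> r"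
    unfolding D_def using card_Diff_subset[OF _ HG] cardH cardG fin_cl H_def by simp
  have finD: "finite D" unfolding D_def G_def using fin_cl by simp
  have DG: "D \<subseteq> \<Gamma>" unfolding D_def G_def using cl_sub by auto
  have sD: "s \<in> D"
  proof -
    have "s \<notin> vec.span S'" using S(3) s vec.dependent_def unfolding S'_def by blast
    then show ?thesis using s S(2) sub_cl[OF S(2)] unfolding D_def G_def H_def cl_def by auto
  qed
  obtain B where B: "B \<subseteq> D" "vec.independent B" "D \<subseteq> vec.span B"
    using vec.maximal_independent_subset by blast
  have finB: "finite B" using B(1) finD finite_subset by blast
  have BG: "B \<subseteq> \<Gamma>" using B(1) DG by auto
  have "\<forall>b\<in>B. \<exists>F. F \<in> forms_deg 2 \<and> eval_form 2 F b \<noteq> 0 \<and> (\<forall>q\<in>H. eval_form 2 F q = 0) \<and>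
          (\<forall>b'\<in>B. b' \<noteq> b \<longrightarrow> eval_form 2 F b' = 0)"
  proof
    fix b assume b: "b \<in> B"
    have "b \<notin> vec.span S'" using b B(1) DG unfolding D_def H_def cl_def by auto
    then obtain h1 where h1: "\<forall>a\<in>vec.span S'. lin h1 a = 0" "lin h1 b \<noteq> 0" using separate by blast
    have "b \<notin> vec.span (B - {b})" using b B(2) vec.dependent_def by blast
    then obtain h2 where h2: "\<forall>a\<in>vec.span (B - {b}). lin h2 a = 0" "lin h2 b \<noteq> 0" using separate by blast
    have "rep (Suc (Suc 0)) (\<lambda>x. lin h1 x * (lin h2 x * 1))"
      by (intro rep_lin_mul rep_one)
    then obtain F where F: "F \<in> forms_deg 2" "\<forall>x. eval_form 2 F x = lin h1 x * (lin h2 x * 1)"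
      unfolding rep_def by (auto simp: numeral_2_eq_2)
    have "\<forall>q\<in>H. eval_form 2 F q = 0" using F(2) h1(1) unfolding H_def cl_def by auto
    moreover have "\<forall>b'\<in>B. b' \<noteq> b \<longrightarrow> eval_form 2 F b' = 0"
    proof (intro ballI impI)
      fix b' assume "b' \<in> B" "b' \<noteq> b"
      then have "b' \<in> vec.span (B - {b})" by (intro vec.span_base) auto
      then show "eval_form 2 F b' = 0" using F(2) h2(1) by simp
    qed
    ultimately show "\<exists>F. F \<in> forms_deg 2 \<and> eval_form 2 F b \<noteq> 0 \<and> (\<forall>q\<in>H. eval_form 2 F q = 0) \<and>
          (\<forall>b'\<in>B. b' \<noteq> b \<longrightarrow> eval_form 2 F b' = 0)"
      using F h1(2) h2(2) by auto
  qed
  then obtain Fb where Fb: "\<forall>b\<in>B. Fb b \<in> forms_deg 2 \<and> eval_form 2 (Fb b) b \<noteq> 0 \<and> (\<forall>q\<in>H. eval_form 2 (Fb b) q = 0) \<and>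
          (\<forall>b'\<in>B. b' \<noteq> b \<longrightarrow> eval_form 2 (Fb b) b' = 0)"
    by metis
  obtain l where l: "distinct l" "set l = B" using finite_distinct_list[OF finB] by blast
  define ys where "ys = map (\<lambda>b. (b, Fb b)) l"
  have tys: "tri 2 ys" unfolding ys_def by (rule tri_list) (use l Fb in auto)
  have txs: "tri 2 (ys @ xs1)"
    by (rule tri_append[OF tys xs1(1)]) (use Fb xs1(2) l in \<open>auto simp: ys_def H_def\<close>)
  have len: "length (ys @ xs1) = card B + length xs1"
    unfolding ys_def using l distinct_card by fastforce
  have pts: "fst ` set (ys @ xs1) \<subseteq> cl S"
    using l B(1) xs1(2) HG unfolding ys_def D_def G_def H_def by auto
  let ?k = "card B"
  have kD: "?k \<le> card D" using card_mono[OF finD B(1)] .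
  have k1: "?k \<ge> 1"
  proof (rule ccontr)
    assume "\<not> ?k \<ge> 1"
    then have "card B = 0" by simp
    then have "B = {}" using finB by simp
    then have "s = 0" using B(3) sD by auto
    then show False using sD DG zeroG by auto
  qed
  have nr: "\<nu> r \<ge> r + 1" using nu_ge S'(4) by blast
  have cnt: "?k + min (\<nu> r) (2 * r + 1) \<ge> min (\<nu> (Suc r)) (2 * Suc r + 1)"
  proof (cases "B = D")
    case True
    then have kk: "?k = \<nu> (Suc r) - \<nu> r" using cardD by simp
    have st: "\<nu> (Suc r) \<ge> \<nu> r + 1" using strict[of "Suc r"] S(1) by simp
    show ?thesis
    proof (cases "?k = 1")
      case True
      then have "\<nu> (Suc r) = \<nu> r + 1" using kk st by simp
      then have "\<nu> (Suc r) = Suc r + 1" using GP[of "Suc r"] S(1) by simp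
      then show ?thesis using True st nr by simp
    next
      case False
      then show ?thesis using kk st k1 by simp
    qed
  next
    case False
    then have klt: "?k < card D" using B(1) finD by (meson card_subset_eq kD le_neq_implies_less)
    have k2: "?k \<ge> 2"
    proof (rule ccontr)
      assume "\<not> ?k \<ge> 2"
      then have "?k = 1" using k1 by simp
      then obtain b where b: "B = {b}" using card_1_singletonE by blast
      have "D \<subseteq> B"
      proof
        fix x assume x: "x \<in> D"
        then have "x \<in> vec.span {b}" using B(3) b by auto
        then obtain a where "x = a *s b" unfolding vec.span_singleton by auto
        then have "x = b" using projeq[of b x a] x DG b BG by auto
        then show "x \<in> B" using b by simp
      qed
      then show False using False B(1) by auto
    qed
    have "card (cl B) = \<nu> (?k - 1)" using card_cl[OF BG B(2), of "?k - 1"] k1 by simp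
    moreover have "D \<subseteq> cl B" using B(3) DG unfolding cl_def by auto
    ultimately have "\<nu> (?k - 1) \<ge> card D" using card_mono[OF fin_cl] by metis
    then have nk: "\<nu> (?k - 1) \<ge> (?k - 1) + 2" using klt k1 by simp
    show ?thesis
    proof (cases "?k - 1 \<le> r")
      case True
      have "\<nu> r \<ge> 2 * r - (?k - 1) + 2" using propagate[OF nk True S'(4)] .
      then show ?thesis using k2 True by simp
    next
      case False
      then show ?thesis using nr by simp
    qed
  qed
  show ?case using txs pts len cnt xs1(3) by (intro exI[of _ "ys @ xs1"]) auto
qed

end


lemma choose_id1: "(c + 2 choose 2) = (c + 1 choose 2) + c + 1"
  by (simp add: numeral_2_eq_2)

lemma choose_id2: "(c + 2 choose 2) = (c choose 2) + 2 * c + 1"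
  by (simp add: numeral_2_eq_2)

theorem corollary2p3:
  fixes \<Gamma> :: "('k::alg_closed_field ^ 'n) set" and c d :: nat
  assumes "c = CARD('n) - 1" and "c \<ge> 1"
    and "proj_point_set \<Gamma>" and "card \<Gamma> = d"
    and "linear_semi_uniform_position \<Gamma>"
  shows "(\<forall>m\<ge>2.
           (d \<le> 2*c+1 \<longrightarrow> int (h0_ideal_sheaf \<Gamma> m) = int ((c+m) choose m) - int d) \<and>
           (d \<ge> 2*c+2 \<longrightarrow> int (h0_ideal_sheaf \<Gamma> m) \<le> int ((c+m) choose m) - int (2*c+1)))
       \<and> (d \<le> 2*c+1 \<longrightarrow> int (h0_ideal_sheaf \<Gamma> 2) = int ((c+1) choose 2) + int c + 1 - int d)
       \<and> (d \<ge> 2*c+2 \<longrightarrow> h0_ideal_sheaf \<Gamma> 2 \<le> c choose 2)"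
proof -
  obtain \<nu> where sp: "vec.span \<Gamma> = UNIV" and
    un: "\<forall>i \<le> CARD('n) - 1. \<forall>S \<subseteq> \<Gamma>. vec.independent S \<and> card S = i + 1 \<longrightarrow> card {p \<in> \<Gamma>. p \<in> vec.span S} = \<nu> i"
    using assms(5) unfolding linear_semi_uniform_position_def by blast
  interpret L: lsup \<Gamma> \<nu>
    by unfold_locales (use assms(3) sp un in auto)
  have cn: "CARD('n) = c + 1" using assms(1) by simp
  obtain S where S: "S \<subseteq> \<Gamma>" "vec.independent S" "card S = CARD('n)"
    using L.exists_indep[of "CARD('n)"] by blast
  have dimU: "vec.dim (UNIV :: ('k ^ 'n) set) = CARD('n)" by (simp add: card_cart_basis)
  have "UNIV \<subseteq> vec.span S"
    using vec.card_eq_dim[of S UNIV] S dimU vec.finiteI_independent[OF S(2)] by simp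
  then have clS: "L.cl S = \<Gamma>" unfolding L.cl_def by auto
  have nuc: "\<nu> c = d" using L.card_cl[OF S(1,2), of c] S(3) cn clS assms(4) by simp
  obtain xs where xs: "tri 2 xs" "fst ` set xs \<subseteq> \<Gamma>" "length xs \<ge> min d (2 * c + 1)"
    using L.main[OF _ S(1,2), of c] S(3) cn clS nuc by auto
  have dist: "distinct (map fst xs)" by (rule tri_distinct[OF xs(1)])
  have lenc: "length xs = card (fst ` set xs)"
    using distinct_card[OF dist] by simp
  have lend: "length xs \<le> d" using lenc card_mono[OF L.finG xs(2)] assms(4) by simp
  have gen: "(d \<le> 2*c+1 \<longrightarrow> h0_ideal_sheaf \<Gamma> m + d = (c+m) choose m) \<and>
             (d \<ge> 2*c+2 \<longrightarrow> h0_ideal_sheaf \<Gamma> m + (2*c+1) \<le> (c+m) choose m)" if m: "m \<ge> 2" for m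
  proof -
    have "0 \<notin> fst ` set xs" using xs(2) L.zeroG by auto
    then obtain ys where ys: "tri m ys" "map fst ys = map fst xs" using tri_lift[OF xs(1) _ m] by blast
    have lys: "length ys = length xs" using ys(2) by (metis length_map)
    have pys: "fst ` set ys = fst ` set xs" using ys(2) by (metis set_map)
    have N: "card (monomials_deg m :: ('n \<Rightarrow> nat) set) = (c + m) choose m"
      using card_monomials[where 'n='n and m=m] cn by (simp add: add.commute)
    have up: "h0_ideal_sheaf \<Gamma> m + length ys \<le> (c + m) choose m"
      using h0_upper[OF ys(1)] pys xs(2) N by simp
    show ?thesis
    proof (intro conjI impI)
      assume "d \<le> 2 * c + 1"
      then have ld: "length xs = d" using xs(3) lend by simp
      then have "fst ` set xs = \<Gamma>"
        using lenc assms(4) xs(2) L.finG by (metis card_subset_eq)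
      then have "(c + m) choose m \<le> h0_ideal_sheaf \<Gamma> m + length ys"
        using h0_lower[OF ys(1)] pys N by simp
      then show "h0_ideal_sheaf \<Gamma> m + d = (c + m) choose m" using up lys ld by simp
    next
      assume "d \<ge> 2 * c + 2"
      then show "h0_ideal_sheaf \<Gamma> m + (2 * c + 1) \<le> (c + m) choose m" using up lys xs(3) by simp
    qed
  qed
  show ?thesis
  proof (intro conjI allI impI)
    fix m :: nat assume m: "m \<ge> 2"
    { assume "d \<le> 2 * c + 1"
      then show "int (h0_ideal_sheaf \<Gamma> m) = int ((c+m) choose m) - int d" using gen[OF m] by simp }
    { assume "d \<ge> 2 * c + 2"
      then show "int (h0_ideal_sheaf \<Gamma> m) \<le> int ((c+m) choose m) - int (2*c+1)" using gen[OF m] by simp }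
  next
    assume "d \<le> 2 * c + 1"
    then show "int (h0_ideal_sheaf \<Gamma> 2) = int ((c+1) choose 2) + int c + 1 - int d"
      using gen[of 2] choose_id1[of c] by simp
  next
    assume "d \<ge> 2 * c + 2"
    then show "h0_ideal_sheaf \<Gamma> 2 \<le> c choose 2"
      using gen[of 2] choose_id2[of c] by simp
  qed
qed


end
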